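(* Let $\mathcal{X}$ be an $n$-premaniplex and $(\mathcal{Y},\eta)$ an $(n,m)$-voltage operator. Let $\tau\in\operatorname{Aut}(\mathcal{Y})$ be such that there exists a group homomorphism $\tau^\#:\mathcal{C}^n\to\mathcal{C}^n$ with $\tau^\#(\eta(W))=\eta(W\tau)$ for every $W\in\Pi(\mathcal{Y})$, and suppose that $\mathcal{X}^{\tau^\#}$ is isomorphic to $\mathcal{X}$. Then $\tau$ lifts to $\mathcal{X}\rtimes_\eta\mathcal{Y}$.
   Context: An $n$-premaniplex is an edge-coloured graph (semi-edges and parallel edges allowed) with colours $\{0,\dots,n-1\}$ such that every vertex (flag) is the start of exactly one dart of each colour, and for $|i-j|\ge2$ alternating $i,j$-paths of length 4 are closed; $x^i$ is the $i$-adjacent flag of $x$. $\mathcal{C}^n=\langle r_0,\dots,r_{n-1}\mid r_i^2,\ (r_ir_j)^2\ (|i-j|\ge2)\rangle$ acts on the left on flags by $r_ix=x^i$. Isomorphisms are bijections on flags preserving all adjacencies; automorphisms act on the right and map paths to paths, $W\mapsto W\tau$. For a flag $y$ of an $m$-premaniplex $\mathcal{Y}$ and $\omega\in\mathcal{C}^m$, $W_\omega(y)$ is the homotopy class of paths from $y$ whose colour sequence $i_1,\dots,i_k$ satisfies $r_{i_k}\cdots r_{i_1}=\omega$; these form the fundamental groupoid $\Pi(\mathcal{Y})$. A voltage assignment $\eta:\Pi(\mathcal{Y})\to\mathcal{C}^n$ satisfies $\eta(W_1W_2)=\eta(W_2)\eta(W_1)$; $(\mathcal{Y},\eta)$ is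 an $(n,m)$-voltage operator. $\mathcal{X}\rtimes_\eta\mathcal{Y}$ has flags $\mathcal{X}\times\mathcal{Y}$ and $(x,y)^i=(\eta(W_{r_i}(y))x,r_iy)$, $i\in\{0,\dots,m-1\}$. $\mathcal{X}^{\tau^\#}$ is the $n$-premaniplex with the flags of $\mathcal{X}$ in which the $i$-adjacent flag of $x$ is $\tau^\#(r_i)x$. $\tau\in\operatorname{Aut}(\mathcal{Y})$ lifts to $\mathcal{X}\rtimes_\eta\mathcal{Y}$ if there is $\tilde\tau\in\operatorname{Aut}(\mathcal{X}\rtimes_\eta\mathcal{Y})$ such that the $\mathcal{Y}$-coordinate of $(x,y)\tilde\tau$ is $y\tau$ for all $(x,y)$. *)

theory Defs
  imports "HOL-Algebra.Group"
begin

text \<open>Words over the generators r_0..r_{n-1} are lists of colours; the word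
 [a1,...,ak] represents the product r_a1 r_a2 ... r_ak.  ceq n is the
 congruence generated by the defining relations of C^n.\<close>

inductive ceq :: "nat \<Rightarrow> nat list \<Rightarrow> nat list \<Rightarrow> bool" for n :: nat where
  ceq_refl: "ceq n w w"
| ceq_sym: "ceq n v w \<Longrightarrow> ceq n w v"
| ceq_trans: "ceq n u v \<Longrightarrow> ceq n v w \<Longrightarrow> ceq n u w"
| ceq_inv: "i < n \<Longrightarrow> ceq n (u @ [i, i] @ v) (u @ v)"
| ceq_comm: "i < n \<Longrightarrow> j < n \<Longrightarrow> (i + 2 \<le> j \<or> j + 2 \<le> i) \<Longrightarrow>
      ceq n (u @ [i, j, i, j] @ v) (u @ v)"

definition cox_words :: "nat \<Rightarrow> nat list set" where
  "cox_words n = {w. set w \<subseteq> {..<n}}"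

definition ceq_rel :: "nat \<Rightarrow> (nat list \<times> nat list) set" where
  "ceq_rel n = {(v, w). ceq n v w}"

definition Cox :: "nat \<Rightarrow> nat list set monoid" where
  "Cox n = \<lparr> carrier = cox_words n // ceq_rel n,
             mult = (\<lambda>A B. {w. \<exists>a\<in>A. \<exists>b\<in>B. ceq n (a @ b) w}),
             one = ceq_rel n `` {[]} \<rparr>"

definition cox_gen :: "nat \<Rightarrow> nat \<Rightarrow> nat list set" where
  "cox_gen n i = ceq_rel n `` {[i]}"

text \<open>An n-premaniplex: flag set F, and adj i x = x^i (the i-adjacent flag).\<close>
definition premaniplex :: "nat \<Rightarrow> 'a set \<Rightarrow> (nat \<Rightarrow> 'a \<Rightarrow> 'a) \<Rightarrow> bool" where
  "premaniplex n F adj \<longleftrightarrow>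
     (\<forall>i<n. \<forall>x\<in>F. adj i x \<in> F \<and> adj i (adj i x) = x) \<and>
     (\<forall>i<n. \<forall>j<n. (i + 2 \<le> j \<or> j + 2 \<le> i) \<longrightarrow>
        (\<forall>x\<in>F. adj i (adj j (adj i (adj j x))) = x))"

definition word_act :: "(nat \<Rightarrow> 'a \<Rightarrow> 'a) \<Rightarrow> nat list \<Rightarrow> 'a \<Rightarrow> 'a" where
  "word_act adj w x = foldr adj w x"

definition cox_act :: "(nat \<Rightarrow> 'a \<Rightarrow> 'a) \<Rightarrow> nat list set \<Rightarrow> 'a \<Rightarrow> 'a" where
  "cox_act adj \<omega> x = word_act adj (SOME w. w \<in> \<omega>) x"

definition premaniplex_iso ::
  "nat \<Rightarrow> 'a set \<Rightarrow> (nat \<Rightarrow> 'a \<Rightarrow> 'a) \<Rightarrow> 'b set \<Rightarrow> (nat \<Rightarrow> 'b \<Rightarrow> 'b) \<Rightarrow> ('a \<Rightarrow> 'b) \<Rightarrow> bool" where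
  "premaniplex_iso n F1 adj1 F2 adj2 \<phi> \<longleftrightarrow>
     bij_betw \<phi> F1 F2 \<and> (\<forall>i<n. \<forall>x\<in>F1. \<phi> (adj1 i x) = adj2 i (\<phi> x))"

definition premaniplex_isomorphic ::
  "nat \<Rightarrow> 'a set \<Rightarrow> (nat \<Rightarrow> 'a \<Rightarrow> 'a) \<Rightarrow> 'b set \<Rightarrow> (nat \<Rightarrow> 'b \<Rightarrow> 'b) \<Rightarrow> bool" where
  "premaniplex_isomorphic n F1 adj1 F2 adj2 \<longleftrightarrow> (\<exists>\<phi>. premaniplex_iso n F1 adj1 F2 adj2 \<phi>)"

text \<open>Automorphisms act on the right: y\<tau> is written tau y.\<close>
definition premaniplex_aut :: "nat \<Rightarrow> 'a set \<Rightarrow> (nat \<Rightarrow> 'a \<Rightarrow> 'a) \<Rightarrow> ('a \<Rightarrow> 'a) \<Rightarrow> bool" where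
  "premaniplex_aut n F adj \<tau> \<longleftrightarrow> premaniplex_iso n F adj F adj \<tau>"

text \<open>The homotopy class W_\<omega>(y) is represented by the pair (y, \<omega>).\<close>
definition fund_groupoid :: "nat \<Rightarrow> 'b set \<Rightarrow> ('b \<times> nat list set) set" where
  "fund_groupoid m F = F \<times> carrier (Cox m)"

definition path_start :: "'b \<times> nat list set \<Rightarrow> 'b" where
  "path_start W = fst W"

definition path_end :: "(nat \<Rightarrow> 'b \<Rightarrow> 'b) \<Rightarrow> 'b \<times> nat list set \<Rightarrow> 'b" where
  "path_end adj W = cox_act adj (snd W) (fst W)"

text \<open>Concatenation W_{\<omega>1}(y) W_{\<omega>2}(\<omega>1 y) = W_{\<omega>2 \<omega>1}(y).\<close>
definition path_comp :: "nat \<Rightarrow> 'b \<times> nat list set \<Rightarrow> 'b \<times> nat list set \<Rightarrow> 'b \<times> nat list set" where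
  "path_comp m W1 W2 = (fst W1, snd W2 \<otimes>\<^bsub>Cox m\<^esub> snd W1)"

definition path_map :: "('b \<Rightarrow> 'b) \<Rightarrow> 'b \<times> nat list set \<Rightarrow> 'b \<times> nat list set" where
  "path_map \<tau> W = (\<tau> (fst W), snd W)"

definition voltage_assignment ::
  "nat \<Rightarrow> nat \<Rightarrow> 'b set \<Rightarrow> (nat \<Rightarrow> 'b \<Rightarrow> 'b) \<Rightarrow> ('b \<times> nat list set \<Rightarrow> nat list set) \<Rightarrow> bool" where
  "voltage_assignment n m F adj \<eta> \<longleftrightarrow>
     (\<forall>W\<in>fund_groupoid m F. \<eta> W \<in> carrier (Cox n)) \<and>
     (\<forall>W1\<in>fund_groupoid m F. \<forall>W2\<in>fund_groupoid m F.
        path_end adj W1 = path_start W2 \<longrightarrow>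
        \<eta> (path_comp m W1 W2) = \<eta> W2 \<otimes>\<^bsub>Cox n\<^esub> \<eta> W1)"

definition voltage_operator ::
  "nat \<Rightarrow> nat \<Rightarrow> 'b set \<Rightarrow> (nat \<Rightarrow> 'b \<Rightarrow> 'b) \<Rightarrow> ('b \<times> nat list set \<Rightarrow> nat list set) \<Rightarrow> bool" where
  "voltage_operator n m F adj \<eta> \<longleftrightarrow> premaniplex m F adj \<and> voltage_assignment n m F adj \<eta>"

text \<open>(x,y)^i = (\<eta>(W_{r_i}(y)) x, r_i y); flags are FX \<times> FY.\<close>
definition prod_adj ::
  "nat \<Rightarrow> (nat \<Rightarrow> 'a \<Rightarrow> 'a) \<Rightarrow> (nat \<Rightarrow> 'b \<Rightarrow> 'b) \<Rightarrow> ('b \<times> nat list set \<Rightarrow> nat list set)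
     \<Rightarrow> nat \<Rightarrow> 'a \<times> 'b \<Rightarrow> 'a \<times> 'b" where
  "prod_adj m adjX adjY \<eta> i p =
     (cox_act adjX (\<eta> (snd p, cox_gen m i)) (fst p), adjY i (snd p))"

text \<open>In X^{\<tau>#}, the i-adjacent flag of x is \<tau>#(r_i) x.\<close>
definition twist_adj ::
  "nat \<Rightarrow> (nat \<Rightarrow> 'a \<Rightarrow> 'a) \<Rightarrow> (nat list set \<Rightarrow> nat list set) \<Rightarrow> nat \<Rightarrow> 'a \<Rightarrow> 'a" where
  "twist_adj n adjX tsharp i x = cox_act adjX (tsharp (cox_gen n i)) x"

definition lifts ::
  "nat \<Rightarrow> 'a set \<Rightarrow> (nat \<Rightarrow> 'a \<Rightarrow> 'a) \<Rightarrow> 'b set \<Rightarrow> (nat \<Rightarrow> 'b \<Rightarrow> 'b)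
     \<Rightarrow> ('b \<times> nat list set \<Rightarrow> nat list set) \<Rightarrow> ('b \<Rightarrow> 'b) \<Rightarrow> bool" where
  "lifts m FX adjX FY adjY \<eta> \<tau> \<longleftrightarrow>
     (\<exists>\<tau>'. premaniplex_aut m (FX \<times> FY) (prod_adj m adjX adjY \<eta>) \<tau>' \<and>
           (\<forall>x\<in>FX. \<forall>y\<in>FY. snd (\<tau>' (x, y)) = \<tau> y))"

end

theory Submission
  imports Defs
begin

lemma ceq_words: "ceq n v w \<Longrightarrow> (set v \<subseteq> {..<n}) = (set w \<subseteq> {..<n})"
  by (induction rule: ceq.induct) auto

lemma ceq_append: "ceq n v w \<Longrightarrow> ceq n (u @ v @ u') (u @ w @ u')"
proof (induction rule: ceq.induct)
  case (ceq_refl w) then show ?case by (rule ceq.ceq_refl)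
next
  case (ceq_sym v w) then show ?case by (metis ceq.ceq_sym)
next
  case (ceq_trans a b c) then show ?case by (metis ceq.ceq_trans)
next
  case (ceq_inv i a b)
  then show ?case using ceq.ceq_inv[of i n "u @ a" "b @ u'"] by simp
next
  case (ceq_comm i j a b)
  then show ?case using ceq.ceq_comm[of i n j "u @ a" "b @ u'"] by simp
qed

lemma ceq_app2: "ceq n a a' \<Longrightarrow> ceq n b b' \<Longrightarrow> ceq n (a @ b) (a' @ b')"
  using ceq_append[of n a a' "[]" b] ceq_append[of n b b' a' "[]"]
  by (auto intro: ceq.ceq_trans)

lemma word_act_closed:
  assumes "premaniplex n F adj" "set w \<subseteq> {..<n}" "x \<in> F"
  shows "word_act adj w x \<in> F"
  using assms(2,3)
  by (induction w) (use assms(1) in \<open>auto simp: word_act_def premaniplex_def\<close>)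

lemma word_act_append: "word_act adj (a @ b) x = word_act adj a (word_act adj b x)"
  by (simp add: word_act_def)

lemma word_act_ceq:
  assumes P: "premaniplex n F adj"
  shows "ceq n v w \<Longrightarrow> set v \<subseteq> {..<n} \<longrightarrow> (\<forall>x\<in>F. word_act adj v x = word_act adj w x)"
proof (induction rule: ceq.induct)
  case (ceq_refl w) then show ?case by simp
next
  case (ceq_sym v w) then show ?case using ceq_words by metis
next
  case (ceq_trans a b c) then show ?case using ceq_words by metis
next
  case (ceq_inv i a b)
  show ?case
  proof (intro impI ballI)
    fix x assume s: "set (a @ [i, i] @ b) \<subseteq> {..<n}" and x: "x \<in> F"
    have "word_act adj b x \<in> F" using word_act_closed[OF P _ x, of b] s by auto
    then show "word_act adj (a @ [i, i] @ b) x = word_act adj (a @ b) x"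
      using P ceq_inv(1) by (simp add: word_act_append premaniplex_def word_act_def)
  qed
next
  case (ceq_comm i j a b)
  show ?case
  proof (intro impI ballI)
    fix x assume s: "set (a @ [i, j, i, j] @ b) \<subseteq> {..<n}" and x: "x \<in> F"
    have "word_act adj b x \<in> F" using word_act_closed[OF P _ x, of b] s by auto
    moreover have "\<forall>z\<in>F. adj i (adj j (adj i (adj j z))) = z"
      using P ceq_comm(1-3) unfolding premaniplex_def by blast
    ultimately show "word_act adj (a @ [i, j, i, j] @ b) x = word_act adj (a @ b) x"
      by (simp add: word_act_append word_act_def)
  qed
qed

lemma word_act_inj:
  assumes P: "premaniplex n F adj"
  shows "set w \<subseteq> {..<n} \<Longrightarrow> x \<in> F \<Longrightarrow> y \<in> F \<Longrightarrow> word_act adj w x = word_act adj w y \<Longrightarrow> x = y"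
proof (induction w)
  case Nil then show ?case by (simp add: word_act_def)
next
  case (Cons i w)
  have a: "word_act adj w x \<in> F" "word_act adj w y \<in> F"
    using word_act_closed[OF P] Cons.prems by auto
  have "adj i (adj i (word_act adj w x)) = adj i (adj i (word_act adj w y))"
    using Cons.prems(4) by (simp add: word_act_def)
  then have "word_act adj w x = word_act adj w y" using a P Cons.prems(1)
    by (simp add: premaniplex_def)
  then show ?case using Cons by auto
qed

definition cls :: "nat \<Rightarrow> nat list \<Rightarrow> nat list set" where
  "cls n w = ceq_rel n `` {w}"

lemma cls_mem: "v \<in> cls n w \<longleftrightarrow> ceq n w v"
  by (simp add: cls_def ceq_rel_def)

lemma carrier_Cox: "A \<in> carrier (Cox n) \<longleftrightarrow> (\<exists>w. set w \<subseteq> {..<n} \<and> A = cls n w)"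
  by (auto simp: Cox_def quotient_def cox_words_def cls_def)

lemma cls_in: "set w \<subseteq> {..<n} \<Longrightarrow> cls n w \<in> carrier (Cox n)"
  using carrier_Cox by blast

lemma cox_act_cls:
  assumes P: "premaniplex n F adj" and s: "set w \<subseteq> {..<n}" and x: "x \<in> F"
  shows "cox_act adj (cls n w) x = word_act adj w x"
proof -
  have "w \<in> cls n w" by (simp add: cls_mem ceq_refl)
  then have "(SOME v. v \<in> cls n w) \<in> cls n w" by (rule someI)
  then have c: "ceq n w (SOME v. v \<in> cls n w)" by (simp add: cls_mem)
  show ?thesis unfolding cox_act_def
    using word_act_ceq[OF P c] s x by simp
qed

lemma mult_cls: "cls n a \<otimes>\<^bsub>Cox n\<^esub> cls n b = cls n (a @ b)"
proof -
  have "{w. \<exists>a'\<in>cls n a. \<exists>b'\<in>cls n b. ceq n (a' @ b') w} = cls n (a @ b)"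
  proof (intro equalityI subsetI)
    fix w assume "w \<in> {w. \<exists>a'\<in>cls n a. \<exists>b'\<in>cls n b. ceq n (a' @ b') w}"
    then obtain a' b' where "ceq n a a'" "ceq n b b'" "ceq n (a' @ b') w"
      by (auto simp: cls_mem)
    then show "w \<in> cls n (a @ b)" by (metis ceq_app2 ceq_trans cls_mem)
  next
    fix w assume "w \<in> cls n (a @ b)"
    then show "w \<in> {w. \<exists>a'\<in>cls n a. \<exists>b'\<in>cls n b. ceq n (a' @ b') w}"
    proof -
      have "a \<in> cls n a" "b \<in> cls n b" by (simp_all add: cls_mem ceq.ceq_refl)
      moreover have "ceq n (a @ b) w" using \<open>w \<in> cls n (a @ b)\<close> by (simp add: cls_mem)
      ultimately show ?thesis by blast
    qed
  qed
  then show ?thesis by (simp add: Cox_def)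
qed

lemma cox_act_closed:
  assumes P: "premaniplex n F adj" and A: "A \<in> carrier (Cox n)" and x: "x \<in> F"
  shows "cox_act adj A x \<in> F"
  using A carrier_Cox cox_act_cls[OF P _ x] word_act_closed[OF P _ x] by metis

lemma cox_act_mult:
  assumes P: "premaniplex n F adj" and A: "A \<in> carrier (Cox n)" and B: "B \<in> carrier (Cox n)"
    and x: "x \<in> F"
  shows "cox_act adj (A \<otimes>\<^bsub>Cox n\<^esub> B) x = cox_act adj A (cox_act adj B x)"
proof -
  obtain a b where a: "set a \<subseteq> {..<n}" "A = cls n a" and b: "set b \<subseteq> {..<n}" "B = cls n b"
    using A B carrier_Cox by metis
  have "word_act adj b x \<in> F" using word_act_closed[OF P b(1) x] .
  then show ?thesis using a b x
    by (simp add: mult_cls cox_act_cls[OF P] word_act_append)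
qed

lemma cox_act_inj:
  assumes P: "premaniplex n F adj" and A: "A \<in> carrier (Cox n)" and x: "x \<in> F" and y: "y \<in> F"
    and e: "cox_act adj A x = cox_act adj A y"
  shows "x = y"
proof -
  obtain a where a: "set a \<subseteq> {..<n}" "A = cls n a" using A carrier_Cox by metis
  show ?thesis using e a x y cox_act_cls[OF P] word_act_inj[OF P] by metis
qed

theorem proposition6p4:
  fixes n m :: nat
    and FX :: "'a set" and adjX :: "nat \<Rightarrow> 'a \<Rightarrow> 'a"
    and FY :: "'b set" and adjY :: "nat \<Rightarrow> 'b \<Rightarrow> 'b"
    and \<eta> :: "'b \<times> nat list set \<Rightarrow> nat list set"
    and \<tau> :: "'b \<Rightarrow> 'b"
    and tsharp :: "nat list set \<Rightarrow> nat list set"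
  assumes X: "premaniplex n FX adjX"
    and Y: "voltage_operator n m FY adjY \<eta>"
    and aut: "premaniplex_aut m FY adjY \<tau>"
    and hom: "tsharp \<in> hom (Cox n) (Cox n)"
    and compat: "\<forall>W\<in>fund_groupoid m FY. tsharp (\<eta> W) = \<eta> (path_map \<tau> W)"
    and iso: "premaniplex_isomorphic n FX (twist_adj n adjX tsharp) FX adjX"
  shows "lifts m FX adjX FY adjY \<eta> \<tau>"
proof -
  have tc: "\<And>A. A \<in> carrier (Cox n) \<Longrightarrow> tsharp A \<in> carrier (Cox n)"
    using hom by (auto simp: hom_def)
  have tm: "\<And>A B. A \<in> carrier (Cox n) \<Longrightarrow> B \<in> carrier (Cox n) \<Longrightarrow>
      tsharp (A \<otimes>\<^bsub>Cox n\<^esub> B) = tsharp A \<otimes>\<^bsub>Cox n\<^esub> tsharp B"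
    using hom by (auto simp: hom_def)
  obtain \<phi> where phi: "bij_betw \<phi> FX FX"
    and phiadj: "\<And>i x. i < n \<Longrightarrow> x \<in> FX \<Longrightarrow> \<phi> (twist_adj n adjX tsharp i x) = adjX i (\<phi> x)"
    using iso by (auto simp: premaniplex_isomorphic_def premaniplex_iso_def)
  define \<psi> where "\<psi> = inv_into FX \<phi>"
  have psibij: "bij_betw \<psi> FX FX" unfolding \<psi>_def using phi by (rule bij_betw_inv_into)
  have psiin: "\<And>x. x \<in> FX \<Longrightarrow> \<psi> x \<in> FX" using psibij bij_betwE by blast
  have gen: "\<And>i. i < n \<Longrightarrow> cox_gen n i = cls n [i]" by (simp add: cox_gen_def cls_def)
  have twc: "\<And>i x. i < n \<Longrightarrow> x \<in> FX \<Longrightarrow> twist_adj n adjX tsharp i x \<in> FX"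
  proof -
    fix i x assume i: "i < n" and x: "x \<in> FX"
    have "cls n [i] \<in> carrier (Cox n)" using i by (intro cls_in) simp
    then have "tsharp (cox_gen n i) \<in> carrier (Cox n)" using gen[OF i] tc by simp
    then show "twist_adj n adjX tsharp i x \<in> FX"
      unfolding twist_adj_def using cox_act_closed[OF X _ x] by blast
  qed
  have psiadj: "\<psi> (adjX i y) = twist_adj n adjX tsharp i (\<psi> y)" if i: "i < n" and y: "y \<in> FX" for i y
  proof -
    have "\<phi> (\<psi> y) = y" unfolding \<psi>_def using phi y by (meson bij_betw_inv_into_right)
    then have "\<phi> (twist_adj n adjX tsharp i (\<psi> y)) = adjX i y" using phiadj[OF i psiin[OF y]] by simp
    moreover have inj: "inj_on \<phi> FX" using phi by (simp add: bij_betw_def)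
    moreover have "\<psi> (\<phi> (twist_adj n adjX tsharp i (\<psi> y))) = twist_adj n adjX tsharp i (\<psi> y)"
      using inv_into_f_f[OF inj twc[OF i psiin[OF y]]] by (simp add: \<psi>_def)
    ultimately show ?thesis by simp
  qed
  have key: "\<psi> (word_act adjX w x) = cox_act adjX (tsharp (cls n w)) (\<psi> x)"
    if "set w \<subseteq> {..<n}" "x \<in> FX" for w x
    using that
  proof (induction w)
    case Nil
    define e where "e = tsharp (cls n [])"
    have ec: "e \<in> carrier (Cox n)" unfolding e_def by (rule tc, rule cls_in) simp
    have ee: "e \<otimes>\<^bsub>Cox n\<^esub> e = e" unfolding e_def
      using tm[of "cls n []" "cls n []"] cls_in[of "[]" n] mult_cls[of n "[]" "[]"] by simp
    have z: "\<psi> x \<in> FX" using psiin Nil by simp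
    have "cox_act adjX e (cox_act adjX e (\<psi> x)) = cox_act adjX e (\<psi> x)"
      using cox_act_mult[OF X ec ec z] ee by simp
    then have "cox_act adjX e (\<psi> x) = \<psi> x"
      using cox_act_inj[OF X ec cox_act_closed[OF X ec z] z] by simp
    then show ?case by (simp add: e_def word_act_def)
  next
    case (Cons i w)
    have i: "i < n" and w: "set w \<subseteq> {..<n}" using Cons.prems by auto
    have z: "word_act adjX w x \<in> FX" using word_act_closed[OF X w Cons.prems(2)] .
    have ci: "cls n [i] \<in> carrier (Cox n)" using i by (intro cls_in) simp
    have cw: "cls n w \<in> carrier (Cox n)" using w by (rule cls_in)
    have "\<psi> (word_act adjX (i # w) x) = \<psi> (adjX i (word_act adjX w x))"
      by (simp add: word_act_def)
    also have "\<dots> = twist_adj n adjX tsharp i (\<psi> (word_act adjX w x))"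
      using psiadj[OF i z] .
    also have "\<dots> = cox_act adjX (tsharp (cls n [i])) (cox_act adjX (tsharp (cls n w)) (\<psi> x))"
      using Cons.IH[OF w Cons.prems(2)] by (simp add: twist_adj_def gen[OF i])
    also have "\<dots> = cox_act adjX (tsharp (cls n [i]) \<otimes>\<^bsub>Cox n\<^esub> tsharp (cls n w)) (\<psi> x)"
      using cox_act_mult[OF X tc[OF ci] tc[OF cw] psiin[OF Cons.prems(2)]] by simp
    also have "\<dots> = cox_act adjX (tsharp (cls n (i # w))) (\<psi> x)"
      using tm[OF ci cw] mult_cls[of n "[i]" w] by simp
    finally show ?case .
  qed
  have keyA: "\<psi> (cox_act adjX A x) = cox_act adjX (tsharp A) (\<psi> x)"
    if hA: "A \<in> carrier (Cox n)" and hx: "x \<in> FX" for A x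
  proof -
    obtain w where w: "set w \<subseteq> {..<n}" "A = cls n w" using hA carrier_Cox by blast
    show ?thesis using key[OF w(1) hx] cox_act_cls[OF X w(1) hx] w(2) by simp
  qed
  have Yv: "voltage_assignment n m FY adjY \<eta>" using Y by (simp add: voltage_operator_def)
  have taubij: "bij_betw \<tau> FY FY" and tauadj: "\<And>i y. i < m \<Longrightarrow> y \<in> FY \<Longrightarrow> \<tau> (adjY i y) = adjY i (\<tau> y)"
    using aut by (auto simp: premaniplex_aut_def premaniplex_iso_def)
  have tauin: "\<And>y. y \<in> FY \<Longrightarrow> \<tau> y \<in> FY" using taubij bij_betwE by blast
  define T where "T = map_prod \<psi> \<tau>"
  have "premaniplex_aut m (FX \<times> FY) (prod_adj m adjX adjY \<eta>) T"
    unfolding premaniplex_aut_def premaniplex_iso_def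
  proof (intro conjI allI impI ballI)
    show "bij_betw T (FX \<times> FY) (FX \<times> FY)" unfolding T_def
      using psibij taubij by (rule bij_betw_map_prod)
  next
    fix i p assume i: "i < m" and p: "p \<in> FX \<times> FY"
    obtain x y where xy: "p = (x, y)" "x \<in> FX" "y \<in> FY" using p by auto
    have gm: "cox_gen m i \<in> carrier (Cox m)" using i cls_in[of "[i]" m]
      by (simp add: cox_gen_def cls_def)
    have W: "(y, cox_gen m i) \<in> fund_groupoid m FY" using xy gm by (simp add: fund_groupoid_def)
    have ec: "\<eta> (y, cox_gen m i) \<in> carrier (Cox n)" using Yv W by (auto simp: voltage_assignment_def)
    have "tsharp (\<eta> (y, cox_gen m i)) = \<eta> (\<tau> y, cox_gen m i)"
      using compat W by (simp add: path_map_def)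
    then show "T (prod_adj m adjX adjY \<eta> i p) = prod_adj m adjX adjY \<eta> i (T p)"
      using keyA[OF ec xy(2)] tauadj[OF i xy(3)] xy(1)
      by (simp add: T_def prod_adj_def)
  qed
  moreover have "\<forall>x\<in>FX. \<forall>y\<in>FY. snd (T (x, y)) = \<tau> y" by (simp add: T_def)
  ultimately show ?thesis unfolding lifts_def by blast
qed

end
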